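(* Let $(S,+)$ be an infinite semigroup with no idempotent element which is left weakly cancellative and right cancellative, and let $\langle x_n\rangle_{n=1}^\infty$ be a sequence in $S$. Then there exists a sum subsystem $\langle y_n\rangle_{n=1}^\infty$ of $\langle x_n\rangle_{n=1}^\infty$ which satisfies uniqueness of finite sums.
   Context: $S$ is left weakly cancellative if for all $a,b\in S$ the set $\{x: a+x=b\}$ is finite; $S$ is right cancellative if for all $a,b$ the set $\{x: x+a=b\}$ has at most one element; $e$ is idempotent if $e+e=e$. $\mathcal{P}_f(\mathbb{N})$ is the set of nonempty finite subsets of $\mathbb{N}=\{1,2,\dots\}$, and $\sum_{n\in H}x_n$ denotes the sum in increasing order of indices. A sequence $\langle y_n\rangle_{n=1}^\infty$ is a sum subsystem of $\langle x_n\rangle_{n=1}^\infty$ if there are $H_n\in\mathcal{P}_f(\mathbb{N})$ with $\max H_n<\min H_{n+1}$ and $y_n=\sum_{t\in H_n}x_t$ for all $n$. A sequence $\langle y_n\rangle_{n=1}^\infty$ satisfies uniqueness of finite sums if for all distinct $H_1,H_2\in\mathcal{P}_f(\mathbb{N})$, $\sum_{n\in H_1}y_n\neq\sum_{n\in H_2}y_n$. *)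

theory Defs
  imports Main
begin

text \<open>Sum of a nonempty list in the given order (left to right); the empty list
  is never used.\<close>
fun lsum :: "'a::semigroup_add list \<Rightarrow> 'a" where
  "lsum [] = undefined"
| "lsum [a] = a"
| "lsum (a # b # xs) = a + lsum (b # xs)"

definition fsum :: "(nat \<Rightarrow> 'a::semigroup_add) \<Rightarrow> nat set \<Rightarrow> 'a" where
  "fsum x H = lsum (map x (sorted_list_of_set H))"

definition Pf :: "nat set set" where
  "Pf = {H. finite H \<and> H \<noteq> {}}"

definition sum_subsystem :: "(nat \<Rightarrow> 'a::semigroup_add) \<Rightarrow> (nat \<Rightarrow> 'a) \<Rightarrow> bool" where
  "sum_subsystem y x \<longleftrightarrow>
     (\<exists>H :: nat \<Rightarrow> nat set. (\<forall>n. H n \<in> Pf) \<and> (\<forall>n. Max (H n) < Min (H (Suc n)))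
        \<and> (\<forall>n. y n = fsum x (H n)))"

definition uniq_fin_sums :: "(nat \<Rightarrow> 'a::semigroup_add) \<Rightarrow> bool" where
  "uniq_fin_sums y \<longleftrightarrow>
     (\<forall>H1\<in>Pf. \<forall>H2\<in>Pf. H1 \<noteq> H2 \<longrightarrow> fsum y H1 \<noteq> fsum y H2)"

end

theory Submission
  imports Defs
begin

lemma lsum_append:
  fixes xs ys :: "'a::semigroup_add list"
  assumes "xs \<noteq> []" "ys \<noteq> []"
  shows "lsum (xs @ ys) = lsum xs + lsum ys"
  using assms(1)
proof (induction xs rule: lsum.induct)
  case 1 then show ?case by simp
next
  case (2 a)
  then show ?case using assms(2) by (cases ys) auto
next
  case (3 a b xs)
  then show ?case by (simp add: add.assoc)
qed

lemma sorted_union: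
  assumes "finite A" "finite B" "\<forall>a\<in>A. \<forall>b\<in>B. a < (b::nat)"
  shows "sorted_list_of_set (A \<union> B) = sorted_list_of_set A @ sorted_list_of_set B"
proof -
  have "sorted_wrt (<) (sorted_list_of_set A @ sorted_list_of_set B) \<and>
        set (sorted_list_of_set A @ sorted_list_of_set B) = A \<union> B \<and>
        length (sorted_list_of_set A @ sorted_list_of_set B) = card (A \<union> B)"
  proof (intro conjI)
    show "sorted_wrt (<) (sorted_list_of_set A @ sorted_list_of_set B)"
      using assms by (simp add: sorted_wrt_append)
    show "set (sorted_list_of_set A @ sorted_list_of_set B) = A \<union> B" using assms by simp
    have "A \<inter> B = {}" using assms by auto
    then show "length (sorted_list_of_set A @ sorted_list_of_set B) = card (A \<union> B)"
      using assms by (simp add: card_Un_disjoint)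
  qed
  then show ?thesis using assms
    by (metis finite_UnI sorted_list_of_set_unique)
qed

lemma fsum_union:
  assumes "A \<in> Pf" "B \<in> Pf" "\<forall>a\<in>A. \<forall>b\<in>B. a < (b::nat)"
  shows "fsum f (A \<union> B) = fsum f A + fsum f B"
proof -
  have "sorted_list_of_set A \<noteq> []" "sorted_list_of_set B \<noteq> []"
    using assms by (auto simp: Pf_def)
  then show ?thesis using assms
    by (simp add: fsum_def Pf_def sorted_union lsum_append)
qed

lemma fsum_single: "fsum f {m} = f m"
  by (simp add: fsum_def)

primrec pw :: "'a::semigroup_add \<Rightarrow> nat \<Rightarrow> 'a" where
  "pw t 0 = t"
| "pw t (Suc n) = pw t n + t"

lemma pw_add: "pw t (m + Suc n) = pw t m + pw t n"
  by (induction n) (simp_all add: add.assoc)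

lemma no_right_unit:
  fixes s t :: "'a::semigroup_add"
  assumes noid: "\<forall>e::'a. e + e \<noteq> e"
    and lwc: "\<forall>a b :: 'a. finite {z. a + z = b}"
    and eq: "s + t = s"
  shows False
proof -
  have fix_all: "s + pw t n = s" for n
  proof (induction n)
    case 0 then show ?case using eq by simp
  next
    case (Suc n)
    have "s + pw t (Suc n) = (s + pw t n) + t" by (simp add: add.assoc)
    then show ?case using Suc eq by simp
  qed
  have "range (pw t) \<subseteq> {z. s + z = s}" using fix_all by auto
  then have "finite (range (pw t))" using lwc finite_subset by blast
  then have "\<not> inj (pw t)" using finite_imageD by blast
  then obtain i j where ij: "i < j" "pw t i = pw t j"
    unfolding inj_def by (metis linorder_neqE_nat)
  define p where "p = j - i"
  have pp: "p > 0" "j = i + p" using ij by (auto simp: p_def)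
  have per1: "pw t (i + p + d) = pw t (i + d)" for d
  proof (cases d)
    case 0 then show ?thesis using ij pp by simp
  next
    case (Suc d')
    have "pw t (i + p + Suc d') = pw t (i + p) + pw t d'" by (rule pw_add)
    also have "\<dots> = pw t i + pw t d'" using ij pp by simp
    also have "\<dots> = pw t (i + Suc d')" by (rule pw_add[symmetric])
    finally show ?thesis using Suc by simp
  qed
  have per: "pw t (i + d + q * p) = pw t (i + d)" for d q
  proof (induction q)
    case 0 then show ?case by simp
  next
    case (Suc q)
    have "pw t (i + d + Suc q * p) = pw t (i + p + (d + q * p))" by (simp add: algebra_simps)
    also have "\<dots> = pw t (i + (d + q * p))" by (rule per1)
    finally show ?case using Suc by (simp add: algebra_simps)
  qed
  define k where "k = (i + 1) * p - 1"
  have "(i + 1) * 1 \<le> (i + 1) * p" using pp by (intro mult_le_mono2) simp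
  then have kge: "k \<ge> i" unfolding k_def by simp
  have k1: "Suc k = (i + 1) * p" using pp unfolding k_def
    by (simp add: Suc_diff_1)
  have "pw t k + pw t k = pw t (k + Suc k)" by (rule pw_add[symmetric])
  also have "\<dots> = pw t (i + (k - i) + (i + 1) * p)" using kge k1 by simp
  also have "\<dots> = pw t (i + (k - i))" by (rule per)
  also have "\<dots> = pw t k" using kge by simp
  finally show False using noid by blast
qed


lemma no_left_fix:
  fixes B z :: "'a::semigroup_add"
  assumes noid: "\<forall>e::'a. e + e \<noteq> e"
    and rc: "\<forall>a b z w :: 'a. z + a = b \<and> w + a = b \<longrightarrow> z = w"
    and eq: "B + z = z"
  shows False
proof -
  have "(B + B) + z = z" using eq by (simp add: add.assoc)
  then have "B + B = B" using rc eq by blast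
  then show False using noid by blast
qed

definition FSx :: "(nat \<Rightarrow> 'a::semigroup_add) \<Rightarrow> nat \<Rightarrow> 'a set" where
  "FSx x N = fsum x ` {K. K \<in> Pf \<and> K \<subseteq> {..<N}}"

definition Gx :: "(nat \<Rightarrow> 'a::semigroup_add) \<Rightarrow> nat \<Rightarrow> 'a set" where
  "Gx x N = FSx x N \<union> {z. \<exists>A\<in>FSx x N. \<exists>B\<in>FSx x N. A + z = B}"

lemma finite_FSx: "finite (FSx x N)"
proof -
  have "{K. K \<in> Pf \<and> K \<subseteq> {..<N}} \<subseteq> Pow {..<N}" by auto
  then have "finite {K. K \<in> Pf \<and> K \<subseteq> {..<N}}" by (rule finite_subset) simp
  then show ?thesis unfolding FSx_def by simp
qed

lemma finite_Gx:
  fixes x :: "nat \<Rightarrow> 'a::semigroup_add"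
  assumes lwc: "\<forall>a b :: 'a. finite {z. a + z = b}"
  shows "finite (Gx x N)"
proof -
  have "{z. \<exists>A\<in>FSx x N. \<exists>B\<in>FSx x N. A + z = B} = (\<Union>A\<in>FSx x N. \<Union>B\<in>FSx x N. {z. A + z = B})"
    by auto
  moreover have "finite (\<Union>A\<in>FSx x N. \<Union>B\<in>FSx x N. {z. A + z = B})"
    using lwc by (intro finite_UN_I finite_FSx) auto
  ultimately show ?thesis unfolding Gx_def using finite_FSx by simp
qed

lemma exists_next:
  fixes x :: "nat \<Rightarrow> 'a::semigroup_add"
  assumes noid: "\<forall>e::'a. e + e \<noteq> e"
    and lwc: "\<forall>a b :: 'a. finite {z. a + z = b}"
  shows "\<exists>b > N. fsum x {N..<b} \<notin> Gx x N"
proof (rule ccontr)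
  assume "\<not> ?thesis"
  then have "(\<lambda>b. fsum x {N..<b}) ` {N<..} \<subseteq> Gx x N" by auto
  then have fin: "finite ((\<lambda>b. fsum x {N..<b}) ` {N<..})"
    using finite_Gx[OF lwc] finite_subset by blast
  have "\<not> inj_on (\<lambda>b. fsum x {N..<b}) {N<..}"
    using finite_imageD[OF fin] infinite_Ioi by blast
  then obtain i j where ij: "N < i" "i < j" "fsum x {N..<i} = fsum x {N..<j}"
    unfolding inj_on_def by (metis greaterThan_iff linorder_neqE_nat)
  have "{N..<j} = {N..<i} \<union> {i..<j}" using ij by auto
  moreover have "{N..<i} \<in> Pf" "{i..<j} \<in> Pf" using ij by (auto simp: Pf_def)
  ultimately have "fsum x {N..<j} = fsum x {N..<i} + fsum x {i..<j}"
    using fsum_union[of "{N..<i}" "{i..<j}" x] by auto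
  then show False using no_right_unit[OF noid lwc] ij by metis
qed

lemma Pf_decomp:
  assumes "H \<in> Pf" "H \<noteq> {Max H}"
  shows "H - {Max H} \<in> Pf" "H - {Max H} \<subseteq> {..<Max H}"
    "fsum f H = fsum f (H - {Max H}) + f (Max H)"
    "card (H - {Max H}) < card H"
proof -
  have fin: "finite H" "H \<noteq> {}" using assms by (auto simp: Pf_def)
  then have mx: "Max H \<in> H" by simp
  show P: "H - {Max H} \<in> Pf" using fin mx assms(2) by (auto simp: Pf_def)
  show S: "H - {Max H} \<subseteq> {..<Max H}" using fin by (auto simp: less_le)
  have "H = (H - {Max H}) \<union> {Max H}" using mx by auto
  then have "fsum f H = fsum f (H - {Max H}) + fsum f {Max H}"
    using fsum_union[OF P, of "{Max H}"] S by (auto simp: Pf_def)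
  then show "fsum f H = fsum f (H - {Max H}) + f (Max H)" by (simp add: fsum_single)
  show "card (H - {Max H}) < card H" using fin mx by (simp add: card_gt_0_iff)
qed

lemma main_construction:
  fixes x :: "nat \<Rightarrow> 'a::semigroup_add" and c :: "nat \<Rightarrow> nat"
  assumes noid: "\<forall>e::'a. e + e \<noteq> e"
    and rc: "\<forall>a b z w :: 'a. z + a = b \<and> w + a = b \<longrightarrow> z = w"
    and cinc: "\<forall>n. c n < c (Suc n)"
    and ydef: "\<forall>n. y n = fsum x {c n..<c (Suc n)}"
    and good: "\<forall>n. y n \<notin> Gx x (c n)"
  shows "uniq_fin_sums y"
proof -
  have sm: "strict_mono c" using cinc by (simp add: strict_mono_Suc_iff)
  have cmono: "m \<le> n \<Longrightarrow> c m \<le> c n" for m n using sm by (simp add: strict_mono_less_eq)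
  have L1: "\<exists>K\<in>Pf. K \<subseteq> {..<c (Suc (Max H))} \<and> fsum y H = fsum x K" if "H \<in> Pf" for H
    using that
  proof (induction "card H" arbitrary: H rule: less_induct)
    case less
    define m where "m = Max H"
    have blk: "{c m..<c (Suc m)} \<in> Pf" using cinc by (auto simp: Pf_def)
    show ?case
    proof (cases "H = {m}")
      case True
      then have "fsum y H = fsum x {c m..<c (Suc m)}" using ydef by (simp add: fsum_single)
      moreover have "{c m..<c (Suc m)} \<subseteq> {..<c (Suc (Max H))}" unfolding m_def by auto
      ultimately show ?thesis using blk by blast
    next
      case False
      note D = Pf_decomp[OF less.prems False[unfolded m_def]]
      obtain K' where K': "K' \<in> Pf" "K' \<subseteq> {..<c (Suc (Max (H - {m})))}"
        "fsum y (H - {m}) = fsum x K'"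
        using less.hyps[OF D(4) D(1)] unfolding m_def by blast
      have "Max (H - {m}) < m" using D(1,2) unfolding m_def Pf_def by auto
      then have "c (Suc (Max (H - {m}))) \<le> c m" using cmono by simp
      then have lt: "\<forall>a\<in>K'. \<forall>b\<in>{c m..<c (Suc m)}. a < b" using K'(2) by fastforce
      have "fsum x (K' \<union> {c m..<c (Suc m)}) = fsum x K' + y m"
        using fsum_union[OF K'(1) blk lt] ydef by simp
      also have "\<dots> = fsum y H" using D(3)[of y] K'(3) unfolding m_def by simp
      finally have e: "fsum y H = fsum x (K' \<union> {c m..<c (Suc m)})" by simp
      have "K' \<union> {c m..<c (Suc m)} \<in> Pf" using K'(1) blk by (auto simp: Pf_def)
      moreover have "K' \<union> {c m..<c (Suc m)} \<subseteq> {..<c (Suc (Max H))}"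
      proof
        fix a assume "a \<in> K' \<union> {c m..<c (Suc m)}"
        then have "a < c (Suc m)" using K'(2) \<open>c (Suc (Max (H - {m}))) \<le> c m\<close> cinc[rule_format, of m]
          by (auto simp del: lessThan_iff)
        then show "a \<in> {..<c (Suc (Max H))}" unfolding m_def by simp
      qed
      ultimately show ?thesis using e by blast
    qed
  qed
  have inFS: "fsum y H \<in> FSx x (c m)" if hh: "H \<in> Pf" "H \<subseteq> {..<m}" for H m
  proof -
    obtain K where K: "K \<in> Pf" "K \<subseteq> {..<c (Suc (Max H))}" "fsum y H = fsum x K"
      using L1[OF hh(1)] by blast
    have "Max H < m" using hh by (auto simp: Pf_def)
    then have "c (Suc (Max H)) \<le> c m" using cmono by simp
    then have "K \<subseteq> {..<c m}" using K(2) by fastforce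
    then show ?thesis using K unfolding FSx_def by auto
  qed
  have diffmax: "fsum y H1 \<noteq> fsum y H2" if "H1 \<in> Pf" "H2 \<in> Pf" "Max H1 < Max H2" for H1 H2
  proof
    assume eq: "fsum y H1 = fsum y H2"
    define m where "m = Max H2"
    have "H1 \<subseteq> {..<m}" using that unfolding m_def Pf_def by (auto intro: le_less_trans[OF Max_ge])
    then have A: "fsum y H1 \<in> FSx x (c m)" using inFS that(1) by blast
    show False
    proof (cases "H2 = {m}")
      case True
      then have "y m \<in> Gx x (c m)" using A eq by (simp add: fsum_single Gx_def)
      then show False using good by blast
    next
      case False
      note D = Pf_decomp[OF that(2) False[unfolded m_def]]
      have "fsum y (H2 - {m}) \<in> FSx x (c m)" using inFS D(1,2) unfolding m_def by blast
      moreover have "fsum y (H2 - {m}) + y m = fsum y H1" using D(3)[of y] eq unfolding m_def by simp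
      ultimately have "y m \<in> Gx x (c m)" using A unfolding Gx_def by blast
      then show False using good by blast
    qed
  qed
  have main: "fsum y H1 = fsum y H2 \<Longrightarrow> H1 \<in> Pf \<Longrightarrow> H2 \<in> Pf \<Longrightarrow> H1 = H2" for H1 H2
  proof (induction "card H1" arbitrary: H1 H2 rule: less_induct)
    case less
    have m12: "Max H1 = Max H2"
      using diffmax[OF less.prems(2,3)] diffmax[OF less.prems(3,2)] less.prems(1)
      by (metis linorder_neqE_nat)
    obtain m where m1: "Max H1 = m" and m2: "Max H2 = m" using m12 by blast
    have ins: "H = insert (Max H) (H - {Max H})" if "H \<in> Pf" for H
      using that unfolding Pf_def by (simp add: insert_absorb)
    show ?case
    proof (cases "H1 = {m}"; cases "H2 = {m}")
      assume "H1 = {m}" "H2 = {m}" then show ?thesis by simp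
    next
      assume a: "H1 = {m}" "H2 \<noteq> {m}"
      note D = Pf_decomp[OF less.prems(3) a(2)[folded m2], unfolded m2]
      have "fsum y H1 = y m" using a(1) by (simp add: fsum_single)
      then have "fsum y (H2 - {m}) + y m = y m"
        using D(3)[of y] less.prems(1) by simp
      then show ?thesis using no_left_fix[OF noid rc] by blast
    next
      assume a: "H1 \<noteq> {m}" "H2 = {m}"
      note D = Pf_decomp[OF less.prems(2) a(1)[folded m1], unfolded m1]
      have "fsum y H2 = y m" using a(2) by (simp add: fsum_single)
      then have "fsum y (H1 - {m}) + y m = y m"
        using D(3)[of y] less.prems(1) by simp
      then show ?thesis using no_left_fix[OF noid rc] by blast
    next
      assume a: "H1 \<noteq> {m}" "H2 \<noteq> {m}"
      note D1 = Pf_decomp[OF less.prems(2) a(1)[folded m1], unfolded m1]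
      note D2 = Pf_decomp[OF less.prems(3) a(2)[folded m2], unfolded m2]
      have "fsum y (H1 - {m}) + y m = fsum y (H2 - {m}) + y m"
        using D1(3)[of y] D2(3)[of y] less.prems(1) by simp
      then have "fsum y (H1 - {m}) = fsum y (H2 - {m})" using rc by blast
      then have "H1 - {m} = H2 - {m}"
        using less.hyps[OF D1(4)] D1(1) D2(1) by blast
      then show ?thesis using ins[OF less.prems(2), unfolded m1] ins[OF less.prems(3), unfolded m2]
        by metis
    qed
  qed
  show ?thesis unfolding uniq_fin_sums_def using main by blast
qed

theorem theorem2p4:
  fixes x :: "nat \<Rightarrow> 'a::semigroup_add"
  assumes "infinite (UNIV :: 'a set)"
    and "\<forall>e::'a. e + e \<noteq> e"
    and "\<forall>a b :: 'a. finite {z. a + z = b}"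
    and "\<forall>a b z w :: 'a. z + a = b \<and> w + a = b \<longrightarrow> z = w"
  shows "\<exists>y. sum_subsystem y x \<and> uniq_fin_sums y"
proof -
  define nxt where "nxt N = (SOME b. b > N \<and> fsum x {N..<b} \<notin> Gx x N)" for N
  have nxt: "nxt N > N \<and> fsum x {N..<nxt N} \<notin> Gx x N" for N
    unfolding nxt_def using someI_ex[OF exists_next[OF assms(2,3), of N x]] by blast
  define c where "c n = (nxt ^^ n) 0" for n
  have cS: "c (Suc n) = nxt (c n)" for n unfolding c_def by simp
  define y where "y n = fsum x {c n..<c (Suc n)}" for n
  have cinc: "\<forall>n. c n < c (Suc n)" using nxt cS by simp
  have good: "\<forall>n. y n \<notin> Gx x (c n)" using nxt cS y_def by simp
  have u: "uniq_fin_sums y"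
    by (rule main_construction[OF assms(2,4) cinc _ good]) (simp add: y_def)
  have "sum_subsystem y x"
    unfolding sum_subsystem_def
  proof (intro exI[of _ "\<lambda>n. {c n..<c (Suc n)}"] conjI allI)
    fix n
    show "{c n..<c (Suc n)} \<in> Pf" using cinc by (auto simp: Pf_def)
    show "y n = fsum x {c n..<c (Suc n)}" by (simp add: y_def)
    have "Max {c n..<c (Suc n)} < c (Suc n)" using cinc
      by (metis Max_in atLeastLessThan_empty_iff atLeastLessThan_iff finite_atLeastLessThan not_less)
    moreover have "Min {c (Suc n)..<c (Suc (Suc n))} = c (Suc n)" using cinc
      by (intro Min_eqI) auto
    ultimately show "Max {c n..<c (Suc n)} < Min {c (Suc n)..<c (Suc (Suc n))}" by simp
  qed
  then show ?thesis using u by blast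
qed

end
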